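(* For every $\mathcal{V}$-poset $P$: $\mathcal{P}(P;1,1)$ is the number of maximal antichains of $P$; $\mathcal{P}(P;x,0)=x^{m}$ where $m$ is the number of basic elements of $P$; $\mathcal{P}(P;0,1)$ is the number of maximal antichains of $P$ containing no basic elements; $\mathcal{P}(P;2,1)$ is the number of antichains of $P$ (including the empty set); $\mathcal{P}(P;1,2)$ is the number of cutsets of $P$; $\mathcal{P}(P;2,2)=2^{|P|}$.
   Context: All posets are finite. A $\mathcal{V}$-poset is a poset generated from the empty poset by repeatedly applying: disjoint union of $\mathcal{V}$-posets, adding a new greatest element, adding a new least element. The polynomial $\mathcal{P}$ is defined on $\mathcal{V}$-posets by: $\mathcal{P}(\emptyset;x,y)=1$; $\mathcal{P}(\bullet;x,y)=x$ for the one-element poset; $\mathcal{P}(\bigcup_iP_i;x,y)=\prod_i\mathcal{P}(P_i;x,y)$ for a disjoint union; and $\mathcal{P}(P\cup\{g\};x,y)=\mathcal{P}(P\cup\{\ell\};x,y)=\mathcal{P}(P;x,y)+y^{|P|}$ where $g$ (resp. $\ell$) is a new greatest (resp. least) element. An element $x$ is basic if: (B.1) there are no two incomparable elements $u,v$ with $x>u$ and $x>v$; (B.2) there are no two incomparable elements $u,v$ with $x<u$ and $x<v$; (B.3) there is no element $u$ with $u<x$ such that for all $w\neq u,x$ one has ($u\ge w\iff x\ge w$) and ($u\le w\iff x\le w$). An antichain is a set of pairwise incomparable elements; a maximal antichain is one not properly contained in another antichain. A chain is a linearly ordered subset; a cutset is a subset of $P$ meeting every maximal chain. *)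

theory Defs
  imports Main
begin

definition incomparable :: "('a \<Rightarrow> 'a \<Rightarrow> bool) \<Rightarrow> 'a \<Rightarrow> 'a \<Rightarrow> bool" where
  "incomparable le u v \<longleftrightarrow> \<not> le u v \<and> \<not> le v u"

definition less_in :: "('a \<Rightarrow> 'a \<Rightarrow> bool) \<Rightarrow> 'a \<Rightarrow> 'a \<Rightarrow> bool" where
  "less_in le u v \<longleftrightarrow> le u v \<and> u \<noteq> v"

definition is_antichain :: "'a set \<Rightarrow> ('a \<Rightarrow> 'a \<Rightarrow> bool) \<Rightarrow> 'a set \<Rightarrow> bool" where
  "is_antichain A le S \<longleftrightarrow> S \<subseteq> A \<and> (\<forall>u\<in>S. \<forall>v\<in>S. u \<noteq> v \<longrightarrow> incomparable le u v)"

definition is_maximal_antichain :: "'a set \<Rightarrow> ('a \<Rightarrow> 'a \<Rightarrow> bool) \<Rightarrow> 'a set \<Rightarrow> bool" where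
  "is_maximal_antichain A le S \<longleftrightarrow> is_antichain A le S \<and>
     (\<forall>T. is_antichain A le T \<and> S \<subseteq> T \<longrightarrow> T = S)"

definition is_chain :: "'a set \<Rightarrow> ('a \<Rightarrow> 'a \<Rightarrow> bool) \<Rightarrow> 'a set \<Rightarrow> bool" where
  "is_chain A le S \<longleftrightarrow> S \<subseteq> A \<and> (\<forall>u\<in>S. \<forall>v\<in>S. le u v \<or> le v u)"

definition is_maximal_chain :: "'a set \<Rightarrow> ('a \<Rightarrow> 'a \<Rightarrow> bool) \<Rightarrow> 'a set \<Rightarrow> bool" where
  "is_maximal_chain A le S \<longleftrightarrow> is_chain A le S \<and>
     (\<forall>T. is_chain A le T \<and> S \<subseteq> T \<longrightarrow> T = S)"

text \<open>A cutset meets every maximal chain.  The (only possibly) empty maximal chain,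
  occurring only for the empty poset, is disregarded.\<close>
definition is_cutset :: "'a set \<Rightarrow> ('a \<Rightarrow> 'a \<Rightarrow> bool) \<Rightarrow> 'a set \<Rightarrow> bool" where
  "is_cutset A le S \<longleftrightarrow> S \<subseteq> A \<and>
     (\<forall>C. is_maximal_chain A le C \<and> C \<noteq> {} \<longrightarrow> S \<inter> C \<noteq> {})"

definition is_basic :: "'a set \<Rightarrow> ('a \<Rightarrow> 'a \<Rightarrow> bool) \<Rightarrow> 'a \<Rightarrow> bool" where
  "is_basic A le x \<longleftrightarrow> x \<in> A \<and>
     \<not> (\<exists>u\<in>A. \<exists>v\<in>A. incomparable le u v \<and> less_in le u x \<and> less_in le v x) \<and>
     \<not> (\<exists>u\<in>A. \<exists>v\<in>A. incomparable le u v \<and> less_in le x u \<and> less_in le x v) \<and>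
     \<not> (\<exists>u\<in>A. less_in le u x \<and>
          (\<forall>w\<in>A. w \<noteq> u \<and> w \<noteq> x \<longrightarrow>
              ((le w u \<longleftrightarrow> le w x) \<and> (le u w \<longleftrightarrow> le x w))))"

text \<open>Construction terms for V-posets: empty poset, disjoint union, adjoining a new
  greatest element, adjoining a new least element.  Elements are encoded as addresses
  (lists of naturals), which makes the unions disjoint and the new elements fresh.\<close>
datatype vexp = VEmpty | VUnion vexp vexp | VTop vexp | VBot vexp

fun vcar :: "vexp \<Rightarrow> nat list set" where
  "vcar VEmpty = {}"
| "vcar (VUnion a b) = Cons 0 ` vcar a \<union> Cons 1 ` vcar b"
| "vcar (VTop a) = Cons 0 ` vcar a \<union> {[1]}"
| "vcar (VBot a) = Cons 0 ` vcar a \<union> {[1]}"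

fun vle :: "vexp \<Rightarrow> nat list \<Rightarrow> nat list \<Rightarrow> bool" where
  "vle VEmpty u v = False"
| "vle (VUnion a b) u v =
     (u \<noteq> [] \<and> v \<noteq> [] \<and>
      ((hd u = 0 \<and> hd v = 0 \<and> vle a (tl u) (tl v)) \<or>
       (hd u = 1 \<and> hd v = 1 \<and> vle b (tl u) (tl v))))"
| "vle (VTop a) u v =
     ((v = [1] \<and> u \<in> vcar (VTop a)) \<or>
      (u \<noteq> [] \<and> v \<noteq> [] \<and> hd u = 0 \<and> hd v = 0 \<and> vle a (tl u) (tl v)))"
| "vle (VBot a) u v =
     ((u = [1] \<and> v \<in> vcar (VBot a)) \<or>
      (u \<noteq> [] \<and> v \<noteq> [] \<and> hd u = 0 \<and> hd v = 0 \<and> vle a (tl u) (tl v)))"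

text \<open>The polynomial, evaluated in an arbitrary commutative semiring.  Adjoining a
  greatest/least element to the empty poset yields the one-element poset, whose value is x.\<close>
fun vpoly :: "vexp \<Rightarrow> 'a::comm_semiring_1 \<Rightarrow> 'a \<Rightarrow> 'a" where
  "vpoly VEmpty x y = 1"
| "vpoly (VUnion a b) x y = vpoly a x y * vpoly b x y"
| "vpoly (VTop a) x y = (if vcar a = {} then x else vpoly a x y + y ^ card (vcar a))"
| "vpoly (VBot a) x y = (if vcar a = {} then x else vpoly a x y + y ^ card (vcar a))"

end

theory Submission
  imports Defs
begin

lemma vcar_finite: "finite (vcar e)"
  by (induction e) auto

lemma vle_car: "vle e u v \<Longrightarrow> u \<in> vcar e \<and> v \<in> vcar e"
proof (induction e arbitrary: u v)
  case (VUnion a b) then show ?case by (cases u; cases v) (auto split: if_splits)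
next
  case (VTop a) then show ?case by (cases u; cases v) auto
next
  case (VBot a) then show ?case by (cases u; cases v) auto
qed simp

lemma vle_refl: "u \<in> vcar e \<Longrightarrow> vle e u u"
  by (induction e arbitrary: u) auto

lemma vle_antisym: "vle e u v \<Longrightarrow> vle e v u \<Longrightarrow> u = v"
proof (induction e arbitrary: u v)
  case (VUnion a b) then show ?case by (cases u; cases v) auto
next
  case (VTop a) then show ?case by (cases u; cases v) auto
next
  case (VBot a) then show ?case by (cases u; cases v) auto
qed simp

lemma vle_trans: "vle e u v \<Longrightarrow> vle e v w \<Longrightarrow> vle e u w"
proof (induction e arbitrary: u v w)
  case (VUnion a b) then show ?case by (cases u; cases v; cases w) auto
next
  case (VTop a) then show ?case by (cases u; cases v; cases w) (auto dest: vle_car)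
next
  case (VBot a) then show ?case by (cases u; cases v; cases w) (auto dest: vle_car)
qed simp



locale vun =
  fixes A B A' :: "'a set" and le1 le2 le' :: "'a \<Rightarrow> 'a \<Rightarrow> bool" and f g :: "'a \<Rightarrow> 'a"
  assumes A': "A' = f`A \<union> g`B"
  and injf: "inj f" and injg: "inj g" and fg: "\<And>x y. f x \<noteq> g y"
  and ff: "\<And>u v. le' (f u) (f v) = le1 u v" and gg: "\<And>u v. le' (g u) (g v) = le2 u v"
  and fgle: "\<And>u v. \<not> le' (f u) (g v)" and gfle: "\<And>u v. \<not> le' (g u) (f v)"
begin

lemma feq[simp]: "f x = f y \<longleftrightarrow> x = y" using injf by (simp add: inj_eq)
lemma geq[simp]: "g x = g y \<longleftrightarrow> x = y" using injg by (simp add: inj_eq)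
lemma fgne[simp]: "f x \<noteq> g y" "g y \<noteq> f x" using fg by (auto simp: fg[symmetric])

lemma fimg[simp]: "f x \<in> f`X \<longleftrightarrow> x \<in> X" "g x \<in> g`X \<longleftrightarrow> x \<in> X" "f x \<notin> g`X" "g x \<notin> f`X"
  by auto

lemma pre_f: "f -` (f`S \<union> g`T) = S"
  by auto

lemma pre_g: "g -` (f`S \<union> g`T) = T"
  by auto

lemma decomp: "U \<subseteq> A' \<Longrightarrow> U = f`(f-`U) \<union> g`(g-`U) \<and> f-`U \<subseteq> A \<and> g-`U \<subseteq> B"
  unfolding A' by auto

lemma sub_iff: "f`S \<union> g`T \<subseteq> f`S' \<union> g`T' \<longleftrightarrow> S \<subseteq> S' \<and> T \<subseteq> T'"
  by auto

lemma split_set: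
  assumes sub: "\<And>U. P' U \<Longrightarrow> U \<subseteq> A'"
  and sub1: "\<And>S. P1 S \<Longrightarrow> S \<subseteq> A" and sub2: "\<And>T. P2 T \<Longrightarrow> T \<subseteq> B"
  and iff: "\<And>S T. S \<subseteq> A \<Longrightarrow> T \<subseteq> B \<Longrightarrow> P' (f`S \<union> g`T) \<longleftrightarrow> P1 S \<and> P2 T"
  shows "card {U. P' U} = card {S. P1 S} * card {T. P2 T}"
proof -
  have eq: "{U. P' U} = (\<lambda>(S,T). f`S \<union> g`T) ` ({S. P1 S} \<times> {T. P2 T})"
  proof (rule set_eqI, rule iffI)
    fix U assume "U \<in> {U. P' U}"
    then have "P' U" by simp
    with decomp[OF sub[OF this]] iff[of "f-`U" "g-`U"] have "P1 (f-`U)" "P2 (g-`U)" "U = (\<lambda>(S,T). f`S \<union> g`T) (f-`U, g-`U)"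
      by auto
    then show "U \<in> (\<lambda>(S,T). f`S \<union> g`T) ` ({S. P1 S} \<times> {T. P2 T})"
      by blast
  next
    fix U assume "U \<in> (\<lambda>(S,T). f`S \<union> g`T) ` ({S. P1 S} \<times> {T. P2 T})"
    then obtain S T where "U = f`S \<union> g`T" "P1 S" "P2 T" by auto
    then show "U \<in> {U. P' U}" using iff sub1 sub2 by auto
  qed
  have "inj_on (\<lambda>(S,T). f`S \<union> g`T) ({S. P1 S} \<times> {T. P2 T})"
  proof (rule inj_onI, clarsimp)
    fix S T S' T' assume "f`S \<union> g`T = f`S' \<union> g`T'"
    then show "S = S' \<and> T = T'" by (metis pre_f pre_g)
  qed
  then show ?thesis unfolding eq by (simp add: card_image card_cartesian_product)
qed

lemma antichain_iff: "S \<subseteq> A \<Longrightarrow> T \<subseteq> B \<Longrightarrow>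
  is_antichain A' le' (f`S \<union> g`T) \<longleftrightarrow> is_antichain A le1 S \<and> is_antichain B le2 T"
  unfolding is_antichain_def incomparable_def A'
  by (simp add: ball_Un sub_iff ff gg fgle gfle) blast

lemma antichain_sub: "is_antichain X le S \<Longrightarrow> S \<subseteq> X" by (simp add: is_antichain_def)

lemma card_antichain: "card {U. is_antichain A' le' U} = card {S. is_antichain A le1 S} * card {T. is_antichain B le2 T}"
  by (rule split_set) (auto simp: antichain_sub antichain_iff)

lemma mac_iff: assumes "S \<subseteq> A" "T \<subseteq> B"
  shows "is_maximal_antichain A' le' (f`S \<union> g`T) \<longleftrightarrow> is_maximal_antichain A le1 S \<and> is_maximal_antichain B le2 T"
proof
  assume h: "is_maximal_antichain A' le' (f`S \<union> g`T)"
  then have ac: "is_antichain A le1 S" "is_antichain B le2 T"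
    using antichain_iff assms by (auto simp: is_maximal_antichain_def)
  have "is_maximal_antichain A le1 S"
    unfolding is_maximal_antichain_def
  proof (intro conjI allI impI ac)
    fix S' assume "is_antichain A le1 S' \<and> S \<subseteq> S'"
    then have "is_antichain A' le' (f`S' \<union> g`T)" "f`S \<union> g`T \<subseteq> f`S' \<union> g`T"
      using antichain_iff[of S' T] ac antichain_sub[of A le1 S'] antichain_sub[of B le2 T] by auto
    then have "f`S' \<union> g`T = f`S \<union> g`T" using h by (auto simp: is_maximal_antichain_def)
    then show "S' = S" by (metis pre_f)
  qed
  moreover have "is_maximal_antichain B le2 T"
    unfolding is_maximal_antichain_def
  proof (intro conjI allI impI ac)
    fix T' assume "is_antichain B le2 T' \<and> T \<subseteq> T'"
    then have "is_antichain A' le' (f`S \<union> g`T')" "f`S \<union> g`T \<subseteq> f`S \<union> g`T'"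
      using antichain_iff[of S T'] ac antichain_sub[of A le1 S] antichain_sub[of B le2 T'] by auto
    then have "f`S \<union> g`T' = f`S \<union> g`T" using h by (auto simp: is_maximal_antichain_def)
    then show "T' = T" by (metis pre_g)
  qed
  ultimately show "is_maximal_antichain A le1 S \<and> is_maximal_antichain B le2 T" by simp
next
  assume h: "is_maximal_antichain A le1 S \<and> is_maximal_antichain B le2 T"
  show "is_maximal_antichain A' le' (f`S \<union> g`T)"
    unfolding is_maximal_antichain_def
  proof (intro conjI allI impI)
    show "is_antichain A' le' (f`S \<union> g`T)" using h assms antichain_iff
      by (auto simp: is_maximal_antichain_def)
    fix U assume u: "is_antichain A' le' U \<and> f`S \<union> g`T \<subseteq> U"
    then have d: "U = f`(f-`U) \<union> g`(g-`U)" "f-`U \<subseteq> A" "g-`U \<subseteq> B"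
      using decomp antichain_sub by metis+
    then have "is_antichain A le1 (f-`U)" "is_antichain B le2 (g-`U)"
      using antichain_iff u by metis+
    moreover have "S \<subseteq> f-`U" "T \<subseteq> g-`U" using u d sub_iff by metis+
    ultimately have "f-`U = S" "g-`U = T" using h by (auto simp: is_maximal_antichain_def)
    then show "U = f`S \<union> g`T" using d by simp
  qed
qed

lemma mac_sub: "is_maximal_antichain X le S \<Longrightarrow> S \<subseteq> X"
  by (simp add: is_maximal_antichain_def is_antichain_def)

lemma card_mac: "card {U. is_maximal_antichain A' le' U} = card {S. is_maximal_antichain A le1 S} * card {T. is_maximal_antichain B le2 T}"
  by (rule split_set) (auto simp: mac_sub mac_iff)


lemma chain_sub: "is_chain X le S \<Longrightarrow> S \<subseteq> X" by (simp add: is_chain_def)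
lemma mchain_sub: "is_maximal_chain X le S \<Longrightarrow> S \<subseteq> X" by (simp add: is_chain_def is_maximal_chain_def)

lemma chain_iff: "S \<subseteq> A \<Longrightarrow> T \<subseteq> B \<Longrightarrow>
  is_chain A' le' (f`S \<union> g`T) \<longleftrightarrow> is_chain A le1 S \<and> is_chain B le2 T \<and> (S = {} \<or> T = {})"
  unfolding is_chain_def A'
  by (simp add: ball_Un sub_iff ff gg fgle gfle) blast

lemma mchain_iff: assumes "S \<subseteq> A" "T \<subseteq> B"
  shows "is_maximal_chain A' le' (f`S \<union> g`T) \<and> f`S \<union> g`T \<noteq> {} \<longleftrightarrow>
    (is_maximal_chain A le1 S \<and> S \<noteq> {} \<and> T = {}) \<or> (is_maximal_chain B le2 T \<and> T \<noteq> {} \<and> S = {})"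
proof
  assume h: "is_maximal_chain A' le' (f`S \<union> g`T) \<and> f`S \<union> g`T \<noteq> {}"
  then have c: "is_chain A le1 S" "is_chain B le2 T" "S = {} \<or> T = {}"
    using chain_iff assms by (auto simp: is_maximal_chain_def)
  show "(is_maximal_chain A le1 S \<and> S \<noteq> {} \<and> T = {}) \<or> (is_maximal_chain B le2 T \<and> T \<noteq> {} \<and> S = {})"
  proof (cases "T = {}")
    case True
    then have "S \<noteq> {}" using h by auto
    moreover have "is_maximal_chain A le1 S"
      unfolding is_maximal_chain_def
    proof (intro conjI allI impI c)
      fix S' assume s': "is_chain A le1 S' \<and> S \<subseteq> S'"
      then have "is_chain A' le' (f`S' \<union> g`T)" "f`S \<union> g`T \<subseteq> f`S' \<union> g`T"
        using chain_iff[of S' T] c True chain_sub[of A le1 S'] by auto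
      then have "f`S' \<union> g`T = f`S \<union> g`T" using h by (auto simp: is_maximal_chain_def)
      then show "S' = S" by (metis pre_f)
    qed
    ultimately show ?thesis using True by simp
  next
    case False
    then have "S = {}" using c by simp
    moreover have "is_maximal_chain B le2 T"
      unfolding is_maximal_chain_def
    proof (intro conjI allI impI c)
      fix T' assume s': "is_chain B le2 T' \<and> T \<subseteq> T'"
      then have "is_chain A' le' (f`S \<union> g`T')" "f`S \<union> g`T \<subseteq> f`S \<union> g`T'"
        using chain_iff[of S T'] c \<open>S = {}\<close> chain_sub[of B le2 T'] by auto
      then have "f`S \<union> g`T' = f`S \<union> g`T" using h by (auto simp: is_maximal_chain_def)
      then show "T' = T" by (metis pre_g)
    qed
    ultimately show ?thesis using False by simp
  qed
next
  assume h: "(is_maximal_chain A le1 S \<and> S \<noteq> {} \<and> T = {}) \<or> (is_maximal_chain B le2 T \<and> T \<noteq> {} \<and> S = {})"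
  show "is_maximal_chain A' le' (f`S \<union> g`T) \<and> f`S \<union> g`T \<noteq> {}"
  proof (intro conjI)
    show "f`S \<union> g`T \<noteq> {}" using h by auto
    show "is_maximal_chain A' le' (f`S \<union> g`T)"
      unfolding is_maximal_chain_def
    proof (intro conjI allI impI)
      show "is_chain A' le' (f`S \<union> g`T)" using h assms chain_iff
        by (auto simp: is_maximal_chain_def is_chain_def)
      fix U assume u: "is_chain A' le' U \<and> f`S \<union> g`T \<subseteq> U"
      then have d: "U = f`(f-`U) \<union> g`(g-`U)" "f-`U \<subseteq> A" "g-`U \<subseteq> B"
        using decomp chain_sub by metis+
      then have cc: "is_chain A le1 (f-`U)" "is_chain B le2 (g-`U)" "f-`U = {} \<or> g-`U = {}"
        using chain_iff u by metis+
      have ss: "S \<subseteq> f-`U" "T \<subseteq> g-`U" using u d sub_iff by metis+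
      show "U = f`S \<union> g`T"
        using h
      proof
        assume h1: "is_maximal_chain A le1 S \<and> S \<noteq> {} \<and> T = {}"
        then have "g-`U = {}" using cc ss by auto
        moreover have "f-`U = S" using h1 cc ss by (auto simp: is_maximal_chain_def)
        ultimately show ?thesis using d h1 by simp
      next
        assume h1: "is_maximal_chain B le2 T \<and> T \<noteq> {} \<and> S = {}"
        then have "f-`U = {}" using cc ss by auto
        moreover have "g-`U = T" using h1 cc ss by (auto simp: is_maximal_chain_def)
        ultimately show ?thesis using d h1 by simp
      qed
    qed
  qed
qed

lemma cut_sub: "is_cutset X le S \<Longrightarrow> S \<subseteq> X" by (simp add: is_cutset_def)

lemma cut_iff: assumes "S \<subseteq> A" "T \<subseteq> B"
  shows "is_cutset A' le' (f`S \<union> g`T) \<longleftrightarrow> is_cutset A le1 S \<and> is_cutset B le2 T"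
proof
  assume h: "is_cutset A' le' (f`S \<union> g`T)"
  have "is_cutset A le1 S" unfolding is_cutset_def
  proof (intro conjI allI impI assms)
    fix C assume c: "is_maximal_chain A le1 C \<and> C \<noteq> {}"
    then have "is_maximal_chain A' le' (f`C \<union> g`{}) \<and> f`C \<union> g`{} \<noteq> {}"
      using mchain_iff[of C "{}"] mchain_sub by blast
    then have "(f`S \<union> g`T) \<inter> (f`C \<union> g`{}) \<noteq> {}" using h by (simp add: is_cutset_def)
    then show "S \<inter> C \<noteq> {}" by auto
  qed
  moreover have "is_cutset B le2 T" unfolding is_cutset_def
  proof (intro conjI allI impI assms)
    fix C assume c: "is_maximal_chain B le2 C \<and> C \<noteq> {}"
    then have "is_maximal_chain A' le' (f`{} \<union> g`C) \<and> f`{} \<union> g`C \<noteq> {}"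
      using mchain_iff[of "{}" C] mchain_sub by blast
    then have "(f`S \<union> g`T) \<inter> (f`{} \<union> g`C) \<noteq> {}" using h by (simp add: is_cutset_def)
    then show "T \<inter> C \<noteq> {}" by auto
  qed
  ultimately show "is_cutset A le1 S \<and> is_cutset B le2 T" by simp
next
  assume h: "is_cutset A le1 S \<and> is_cutset B le2 T"
  show "is_cutset A' le' (f`S \<union> g`T)" unfolding is_cutset_def
  proof (intro conjI allI impI)
    show "f`S \<union> g`T \<subseteq> A'" using assms A' by auto
    fix C assume c: "is_maximal_chain A' le' C \<and> C \<noteq> {}"
    then have d: "C = f`(f-`C) \<union> g`(g-`C)" "f-`C \<subseteq> A" "g-`C \<subseteq> B"
      using decomp mchain_sub by metis+
    then have "(is_maximal_chain A le1 (f-`C) \<and> f-`C \<noteq> {} \<and> g-`C = {}) \<or> (is_maximal_chain B le2 (g-`C) \<and> g-`C \<noteq> {} \<and> f-`C = {})"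
      using mchain_iff[of "f-`C" "g-`C"] c by metis
    then show "(f`S \<union> g`T) \<inter> C \<noteq> {}"
    proof
      assume "is_maximal_chain A le1 (f-`C) \<and> f-`C \<noteq> {} \<and> g-`C = {}"
      then have "S \<inter> f-`C \<noteq> {}" using h by (auto simp: is_cutset_def)
      then show ?thesis by auto
    next
      assume "is_maximal_chain B le2 (g-`C) \<and> g-`C \<noteq> {} \<and> f-`C = {}"
      then have "T \<inter> g-`C \<noteq> {}" using h by (auto simp: is_cutset_def)
      then show ?thesis by auto
    qed
  qed
qed

lemma card_cut: "card {U. is_cutset A' le' U} = card {S. is_cutset A le1 S} * card {T. is_cutset B le2 T}"
  by (rule split_set) (auto simp: cut_sub cut_iff)


lemma basic_f: "is_basic A' le' (f x) \<longleftrightarrow> is_basic A le1 x"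
  unfolding is_basic_def less_in_def incomparable_def A'
  by (simp add: ball_Un bex_Un ff gg fgle gfle)

lemma basic_g: "is_basic A' le' (g x) \<longleftrightarrow> is_basic B le2 x"
  unfolding is_basic_def less_in_def incomparable_def A'
  by (simp add: ball_Un bex_Un ff gg fgle gfle)

lemma basic_sub: "is_basic X le z \<Longrightarrow> z \<in> X" by (simp add: is_basic_def)

lemma basic_set: "{z. is_basic A' le' z} = f`{z. is_basic A le1 z} \<union> g`{z. is_basic B le2 z}"
proof -
  have "\<And>z. is_basic A' le' z \<Longrightarrow> z \<in> f`{z. is_basic A le1 z} \<union> g`{z. is_basic B le2 z}"
  proof -
    fix z assume "is_basic A' le' z"
    moreover then have "z \<in> f`A \<union> g`B" using basic_sub A' by metis
    ultimately show "z \<in> f`{z. is_basic A le1 z} \<union> g`{z. is_basic B le2 z}"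
      using basic_f basic_g by auto
  qed
  then show ?thesis using basic_f basic_g by auto
qed

lemma card_basic: assumes "finite A" "finite B"
  shows "card {z. is_basic A' le' z} = card {z. is_basic A le1 z} + card {z. is_basic B le2 z}"
proof -
  have fin: "finite {z. is_basic A le1 z}" "finite {z. is_basic B le2 z}"
    using assms by (auto intro: finite_subset basic_sub)
  have "card (f`{z. is_basic A le1 z} \<union> g`{z. is_basic B le2 z}) =
     card (f`{z. is_basic A le1 z}) + card (g`{z. is_basic B le2 z})"
    by (rule card_Un_disjoint) (use fin in auto)
  also have "\<dots> = card {z. is_basic A le1 z} + card {z. is_basic B le2 z}"
    by (simp add: card_image inj_on_def)
  finally show ?thesis by (simp add: basic_set)
qed

lemma card_car: assumes "finite A" "finite B" shows "card A' = card A + card B"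
proof -
  have "card (f`A \<union> g`B) = card (f`A) + card (g`B)"
    by (rule card_Un_disjoint) (use assms in auto)
  then show ?thesis by (simp add: A' card_image inj_on_def)
qed

lemma card_macnb: "card {U. is_maximal_antichain A' le' U \<and> (\<forall>z\<in>U. \<not> is_basic A' le' z)} =
   card {S. is_maximal_antichain A le1 S \<and> (\<forall>z\<in>S. \<not> is_basic A le1 z)} *
   card {T. is_maximal_antichain B le2 T \<and> (\<forall>z\<in>T. \<not> is_basic B le2 z)}"
proof (rule split_set)
  fix S T assume "S \<subseteq> A" "T \<subseteq> B"
  then show "(is_maximal_antichain A' le' (f`S \<union> g`T) \<and> (\<forall>z\<in>f`S \<union> g`T. \<not> is_basic A' le' z)) =
       ((is_maximal_antichain A le1 S \<and> (\<forall>z\<in>S. \<not> is_basic A le1 z)) \<and>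
        (is_maximal_antichain B le2 T \<and> (\<forall>z\<in>T. \<not> is_basic B le2 z)))"
    using mac_iff by (simp add: ball_Un basic_f basic_g) blast
qed (use mac_sub in blast)+

end


lemma exists_max:
  assumes "finite S" "S \<noteq> {}" "\<forall>u\<in>S. \<forall>v\<in>S. le u v \<or> le v u"
    "\<And>x y z. le x y \<Longrightarrow> le y z \<Longrightarrow> le x z"
  shows "\<exists>m\<in>S. \<forall>w\<in>S. le w m"
  using assms(1,2,3)
proof (induction S rule: finite_ne_induct)
  case (singleton x) then show ?case by auto
next
  case (insert x F)
  then obtain m where m: "m \<in> F" "\<forall>w\<in>F. le w m" by auto
  show ?case
  proof (cases "le m x")
    case True
    then show ?thesis using m assms(4) insert.prems by (auto intro!: bexI[of _ x])
  next
    case False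
    then have "le x m" using insert.prems m by auto
    then show ?thesis using m by auto
  qed
qed

locale vtop =
  fixes A A' :: "'a set" and le le' :: "'a \<Rightarrow> 'a \<Rightarrow> bool" and f :: "'a \<Rightarrow> 'a" and t :: 'a
  assumes A': "A' = f`A \<union> {t}" and injf: "inj f" and ft: "\<And>x. f x \<noteq> t"
  and ff: "\<And>u v. le' (f u) (f v) = le u v"
  and ftle: "\<And>u. le' (f u) t = (u \<in> A)"
  and ttle: "le' t t"
  and tfle: "\<And>v. \<not> le' t (f v)"
  and nonempty: "A \<noteq> {}"
  and finA: "finite A"
  and refl: "\<And>x. x \<in> A \<Longrightarrow> le x x"
begin

lemma feq[simp]: "f x = f y \<longleftrightarrow> x = y" using injf by (simp add: inj_eq)
lemma ftne[simp]: "f x \<noteq> t" "t \<noteq> f x" using ft by metis+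
lemma fimg[simp]: "f x \<in> f`X \<longleftrightarrow> x \<in> X" "t \<notin> f`X" by auto

lemma decomp2: assumes "U \<subseteq> A'"
  obtains S where "S \<subseteq> A" "t \<notin> U" "U = f`S" | S where "S \<subseteq> A" "t \<in> U" "U = insert t (f`S)"
proof -
  have s: "f-`U \<subseteq> A"
  proof
    fix x assume "x \<in> f-`U"
    then have "f x \<in> f`A \<union> {t}" using assms A' by auto
    then show "x \<in> A" by simp
  qed
  have e: "U - {t} = f`(f-`U)"
  proof
    show "U - {t} \<subseteq> f`(f-`U)"
    proof
      fix y assume "y \<in> U - {t}"
      then have "y \<in> f`A" "y \<in> U" using assms A' by auto
      then show "y \<in> f`(f-`U)" by auto
    qed
  qed auto
  show ?thesis
  proof (cases "t \<in> U")
    case True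
    then have "U = insert t (f`(f-`U))" using e by blast
    then show ?thesis using that(2)[OF s True] by simp
  next
    case False
    then have "U = f`(f-`U)" using e by simp
    then show ?thesis using that(1)[OF s False] by simp
  qed
qed

lemma card_ins: assumes "X \<subseteq> Pow A" shows "card (insert {t} ((`) f ` X)) = card X + 1"
proof -
  have fin: "finite X" using assms finA by (meson finite_Pow_iff finite_subset)
  have "{t} \<notin> (`) f ` X"
  proof
    assume "{t} \<in> (`) f ` X"
    then obtain x where "{t} = f`x" by auto
    then have "t \<in> f`x" by (metis insertI1)
    then show False by simp
  qed
  moreover have "card ((`) f ` X) = card X"
    by (rule card_image) (auto simp: inj_on_def inj_image_eq_iff[OF injf])
  ultimately show ?thesis using fin by simp
qed

lemma ac_f: "S \<subseteq> A \<Longrightarrow> is_antichain A' le' (f`S) \<longleftrightarrow> is_antichain A le S"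
  unfolding is_antichain_def incomparable_def A' by (auto simp: ff)

lemma ac_t: "S \<subseteq> A \<Longrightarrow> is_antichain A' le' (insert t (f`S)) \<longleftrightarrow> S = {}"
  unfolding is_antichain_def incomparable_def A' by (auto simp: ff ftle)

lemma ac_sub: "is_antichain X r S \<Longrightarrow> S \<subseteq> X" by (simp add: is_antichain_def)
lemma mac_sub: "is_maximal_antichain X r S \<Longrightarrow> S \<subseteq> X"
  by (simp add: is_maximal_antichain_def is_antichain_def)

lemma ac_set: "{U. is_antichain A' le' U} = insert {t} ((`) f ` {S. is_antichain A le S})"
proof (rule set_eqI, rule iffI)
  fix U assume "U \<in> {U. is_antichain A' le' U}"
  then have u: "is_antichain A' le' U" by simp
  show "U \<in> insert {t} ((`) f ` {S. is_antichain A le S})"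
  proof (rule decomp2[OF ac_sub[OF u]])
    fix S assume "S \<subseteq> A" "U = f`S"
    then show ?thesis using ac_f u by auto
  next
    fix S assume "S \<subseteq> A" "U = insert t (f`S)"
    then show ?thesis using ac_t u by auto
  qed
next
  fix U assume "U \<in> insert {t} ((`) f ` {S. is_antichain A le S})"
  then consider "U = {t}" | S where "U = f`S" "is_antichain A le S" by auto
  then show "U \<in> {U. is_antichain A' le' U}"
  proof cases
    case 1 then show ?thesis using ac_t[of "{}"] by simp
  next
    case 2 then show ?thesis using ac_f ac_sub[of A le S] by simp
  qed
qed

lemma card_ac: "card {U. is_antichain A' le' U} = card {S. is_antichain A le S} + 1"
  unfolding ac_set by (rule card_ins) (auto dest: ac_sub)

lemma mac_nonempty: "is_maximal_antichain A le S \<Longrightarrow> S \<noteq> {}"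
proof
  assume "is_maximal_antichain A le S" "S = {}"
  moreover obtain x where "x \<in> A" using nonempty by auto
  moreover then have "is_antichain A le {x}" by (simp add: is_antichain_def)
  ultimately show False by (auto simp: is_maximal_antichain_def)
qed

lemma mac_f: assumes "S \<subseteq> A" shows "is_maximal_antichain A' le' (f`S) \<longleftrightarrow> is_maximal_antichain A le S"
proof
  assume h: "is_maximal_antichain A' le' (f`S)"
  then have ac: "is_antichain A le S" using ac_f assms by (auto simp: is_maximal_antichain_def)
  show "is_maximal_antichain A le S" unfolding is_maximal_antichain_def
  proof (intro conjI allI impI ac)
    fix S' assume "is_antichain A le S' \<and> S \<subseteq> S'"
    then have "is_antichain A' le' (f`S')" "f`S \<subseteq> f`S'" using ac_f ac_sub by blast+
    then have "f`S' = f`S" using h by (auto simp: is_maximal_antichain_def)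
    then show "S' = S" by (simp add: inj_image_eq_iff[OF injf])
  qed
next
  assume h: "is_maximal_antichain A le S"
  then have ne: "S \<noteq> {}" by (rule mac_nonempty)
  show "is_maximal_antichain A' le' (f`S)" unfolding is_maximal_antichain_def
  proof (intro conjI allI impI)
    show "is_antichain A' le' (f`S)" using h ac_f assms by (auto simp: is_maximal_antichain_def)
    fix U assume u: "is_antichain A' le' U \<and> f`S \<subseteq> U"
    show "U = f`S"
    proof (rule decomp2[OF ac_sub[of A' le' U]])
      show "is_antichain A' le' U" using u by simp
    next
      fix S' assume s': "S' \<subseteq> A" "t \<in> U" "U = insert t (f`S')"
      then have "S' = {}" using u ac_t by auto
      then show ?thesis using u ne s' by auto
    next
      fix S' assume s': "S' \<subseteq> A" "t \<notin> U" "U = f`S'"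
      then have "is_antichain A le S'" "S \<subseteq> S'" using u ac_f by auto
      then show ?thesis using h s' by (auto simp: is_maximal_antichain_def)
    qed
  qed
qed

lemma mac_t: "is_maximal_antichain A' le' {t}"
  unfolding is_maximal_antichain_def
proof (intro conjI allI impI)
  show "is_antichain A' le' {t}" using A' by (simp add: is_antichain_def)
  fix U assume u: "is_antichain A' le' U \<and> {t} \<subseteq> U"
  show "U = {t}"
  proof (rule decomp2[OF ac_sub[of A' le' U]])
    show "is_antichain A' le' U" using u by simp
  next
    fix S' assume s': "S' \<subseteq> A" "t \<in> U" "U = insert t (f`S')"
    then have "S' = {}" using u ac_t by auto
    then show ?thesis using s' by auto
  next
    fix S' assume s': "S' \<subseteq> A" "t \<notin> U" "U = f`S'"
    then show ?thesis using u by auto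
  qed
qed

lemma mac_set: "{U. is_maximal_antichain A' le' U} = insert {t} ((`) f ` {S. is_maximal_antichain A le S})"
proof (rule set_eqI, rule iffI)
  fix U assume "U \<in> {U. is_maximal_antichain A' le' U}"
  then have u: "is_maximal_antichain A' le' U" by simp
  then have u': "is_antichain A' le' U" by (simp add: is_maximal_antichain_def)
  show "U \<in> insert {t} ((`) f ` {S. is_maximal_antichain A le S})"
  proof (rule decomp2[OF mac_sub[OF u]])
    fix S' assume s': "S' \<subseteq> A" "t \<in> U" "U = insert t (f`S')"
    then have "S' = {}" using u' ac_t by auto
    then show ?thesis using s' by auto
  next
    fix S' assume s': "S' \<subseteq> A" "t \<notin> U" "U = f`S'"
    then show ?thesis using u mac_f by auto
  qed
next
  fix U assume "U \<in> insert {t} ((`) f ` {S. is_maximal_antichain A le S})"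
  then consider "U = {t}" | S where "U = f`S" "is_maximal_antichain A le S" by auto
  then show "U \<in> {U. is_maximal_antichain A' le' U}"
  proof cases
    case 1 then show ?thesis using mac_t by simp
  next
    case 2 then show ?thesis using mac_f mac_sub[of A le S] by simp
  qed
qed

lemma card_mac: "card {U. is_maximal_antichain A' le' U} = card {S. is_maximal_antichain A le S} + 1"
  unfolding mac_set by (rule card_ins) (auto dest: mac_sub)


lemma ch_sub: "is_chain X r S \<Longrightarrow> S \<subseteq> X" by (simp add: is_chain_def)
lemma mch_sub: "is_maximal_chain X r S \<Longrightarrow> S \<subseteq> X" by (simp add: is_chain_def is_maximal_chain_def)

lemma ch_f: "S \<subseteq> A \<Longrightarrow> is_chain A' le' (f`S) \<longleftrightarrow> is_chain A le S"
  unfolding is_chain_def A' by (auto simp: ff)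

lemma ch_t: "S \<subseteq> A \<Longrightarrow> is_chain A' le' (insert t (f`S)) \<longleftrightarrow> is_chain A le S"
  unfolding is_chain_def A' by (auto simp: ff ftle ttle)

lemma mch_iff: "is_maximal_chain A' le' U \<longleftrightarrow> (\<exists>C. is_maximal_chain A le C \<and> U = insert t (f`C))"
proof
  assume h: "is_maximal_chain A' le' U"
  then have c: "is_chain A' le' U" by (simp add: is_maximal_chain_def)
  show "\<exists>C. is_maximal_chain A le C \<and> U = insert t (f`C)"
  proof (rule decomp2[OF mch_sub[OF h]])
    fix S assume s: "S \<subseteq> A" "t \<notin> U" "U = f`S"
    then have "is_chain A' le' (insert t U)" using c ch_f ch_t by simp
    then have "insert t U = U" using h by (auto simp: is_maximal_chain_def)
    then have False using s by (metis fimg(2) insertI1)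
    then show ?thesis by simp
  next
    fix S assume s: "S \<subseteq> A" "t \<in> U" "U = insert t (f`S)"
    then have cs: "is_chain A le S" using c ch_t by simp
    have "is_maximal_chain A le S" unfolding is_maximal_chain_def
    proof (intro conjI allI impI cs)
      fix D assume d: "is_chain A le D \<and> S \<subseteq> D"
      then have "is_chain A' le' (insert t (f`D))" "U \<subseteq> insert t (f`D)"
        using ch_t[of D] ch_sub[of A le D] s by auto
      then have "insert t (f`D) = insert t (f`S)" using h s by (auto simp: is_maximal_chain_def)
      then have "f`D = f`S" by (metis fimg(2) insert_ident)
      then show "D = S" by (simp add: inj_image_eq_iff[OF injf])
    qed
    then show ?thesis using s by auto
  qed
next
  assume "\<exists>C. is_maximal_chain A le C \<and> U = insert t (f`C)"
  then obtain C where h: "is_maximal_chain A le C" "U = insert t (f`C)" by auto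
  have cc: "is_chain A le C" "C \<subseteq> A" using h by (auto simp: is_maximal_chain_def is_chain_def)
  show "is_maximal_chain A' le' U" unfolding is_maximal_chain_def
  proof (intro conjI allI impI)
    show "is_chain A' le' U" using h cc ch_t by simp
    fix V assume v: "is_chain A' le' V \<and> U \<subseteq> V"
    show "V = U"
    proof (rule decomp2[OF ch_sub[of A' le' V]])
      show "is_chain A' le' V" using v by simp
    next
      fix S assume "S \<subseteq> A" "t \<notin> V" "V = f`S"
      then show ?thesis using v h by auto
    next
      fix S assume s: "S \<subseteq> A" "t \<in> V" "V = insert t (f`S)"
      then have "is_chain A le S" using v ch_t by simp
      moreover have "C \<subseteq> S" using v h s by auto
      ultimately have "S = C" using h by (auto simp: is_maximal_chain_def)
      then show ?thesis using s h by simp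
    qed
  qed
qed

lemma cut_sub: "is_cutset X r S \<Longrightarrow> S \<subseteq> X" by (simp add: is_cutset_def)

lemma mch_nonempty: "is_maximal_chain A le C \<Longrightarrow> C \<noteq> {}"
proof
  assume "is_maximal_chain A le C" "C = {}"
  moreover obtain x where "x \<in> A" using nonempty by auto
  moreover then have "is_chain A le {x}" by (simp add: is_chain_def refl)
  ultimately show False by (auto simp: is_maximal_chain_def)
qed

lemma cut_t: "S \<subseteq> A \<Longrightarrow> is_cutset A' le' (insert t (f`S))"
  unfolding is_cutset_def using mch_iff A' by auto

lemma cut_f: "S \<subseteq> A \<Longrightarrow> is_cutset A' le' (f`S) \<longleftrightarrow> is_cutset A le S"
proof
  assume h: "S \<subseteq> A" "is_cutset A' le' (f`S)"
  show "is_cutset A le S" unfolding is_cutset_def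
  proof (intro conjI allI impI h(1))
    fix C assume c: "is_maximal_chain A le C \<and> C \<noteq> {}"
    then have "is_maximal_chain A' le' (insert t (f`C))" using mch_iff by auto
    moreover have "\<forall>C. is_maximal_chain A' le' C \<and> C \<noteq> {} \<longrightarrow> f`S \<inter> C \<noteq> {}"
      using h(2) by (simp add: is_cutset_def)
    ultimately have "f`S \<inter> insert t (f`C) \<noteq> {}" by blast
    moreover have "f`S \<inter> insert t (f`C) = f`(S \<inter> C)" by auto
    ultimately show "S \<inter> C \<noteq> {}" by auto
  qed
next
  assume h: "S \<subseteq> A" "is_cutset A le S"
  show "is_cutset A' le' (f`S)" unfolding is_cutset_def
  proof (intro conjI allI impI)
    show "f`S \<subseteq> A'" using h A' by auto
    fix U assume "is_maximal_chain A' le' U \<and> U \<noteq> {}"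
    then obtain C where c: "is_maximal_chain A le C" "U = insert t (f`C)" using mch_iff by auto
    then have "S \<inter> C \<noteq> {}" using h mch_nonempty by (auto simp: is_cutset_def)
    then show "f`S \<inter> U \<noteq> {}" using c by auto
  qed
qed

lemma cut_set: "{U. is_cutset A' le' U} = (\<lambda>S. insert t (f`S)) ` Pow A \<union> (`) f ` {S. is_cutset A le S}"
proof (rule set_eqI, rule iffI)
  fix U assume "U \<in> {U. is_cutset A' le' U}"
  then have u: "is_cutset A' le' U" by simp
  show "U \<in> (\<lambda>S. insert t (f`S)) ` Pow A \<union> (`) f ` {S. is_cutset A le S}"
  proof (rule decomp2[OF cut_sub[OF u]])
    fix S assume "S \<subseteq> A" "t \<notin> U" "U = f`S"
    then show ?thesis using u cut_f by auto
  next
    fix S assume "S \<subseteq> A" "t \<in> U" "U = insert t (f`S)"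
    then show ?thesis by auto
  qed
next
  fix U assume "U \<in> (\<lambda>S. insert t (f`S)) ` Pow A \<union> (`) f ` {S. is_cutset A le S}"
  then consider S where "S \<subseteq> A" "U = insert t (f`S)" | S where "is_cutset A le S" "U = f`S" by auto
  then show "U \<in> {U. is_cutset A' le' U}"
  proof cases
    case 1 then show ?thesis using cut_t by simp
  next
    case 2 then show ?thesis using cut_f cut_sub[of A le S] by simp
  qed
qed

lemma card_cut: "card {U. is_cutset A' le' U} = 2 ^ card A + card {S. is_cutset A le S}"
proof -
  have fin: "finite {S. is_cutset A le S}" using finA
    by (rule finite_subset[rotated, OF finite_Pow_iff[THEN iffD2]]) (auto dest: cut_sub)
  have i1: "inj_on (\<lambda>S. insert t (f`S)) (Pow A)"
  proof (rule inj_onI)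
    fix S S' assume "insert t (f`S) = insert t (f`S')"
    then have "f`S = f`S'" by (metis fimg(2) insert_ident)
    then show "S = S'" by (simp add: inj_image_eq_iff[OF injf])
  qed
  have i2: "inj_on ((`) f) {S. is_cutset A le S}"
    by (auto simp: inj_on_def inj_image_eq_iff[OF injf])
  have "card ((\<lambda>S. insert t (f`S)) ` Pow A \<union> (`) f ` {S. is_cutset A le S}) =
     card ((\<lambda>S. insert t (f`S)) ` Pow A) + card ((`) f ` {S. is_cutset A le S})"
    by (rule card_Un_disjoint) (use finA fin in \<open>auto, metis fimg(2) insertI1\<close>)
  also have "\<dots> = 2 ^ card A + card {S. is_cutset A le S}"
    using card_image[OF i1] card_image[OF i2] card_Pow finA by simp
  finally show ?thesis by (simp add: cut_set)
qed

end


locale vtop_po = vtop +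
  assumes car: "\<And>u v. le u v \<Longrightarrow> u \<in> A \<and> v \<in> A"
  and antisym: "\<And>u v. le u v \<Longrightarrow> le v u \<Longrightarrow> u = v"
  and trans: "\<And>u v w. le u v \<Longrightarrow> le v w \<Longrightarrow> le u w"
begin

lemma basic_f: "is_basic A' le' (f x) \<longleftrightarrow> is_basic A le x"
  unfolding is_basic_def less_in_def incomparable_def A'
  by (simp add: ball_Un bex_Un ff ftle tfle ttle) (auto dest: car)


lemma total_max: assumes "\<forall>u\<in>A. \<forall>v\<in>A. le u v \<or> le v u"
  shows "\<exists>m\<in>A. \<forall>w\<in>A. le w m"
  by (rule exists_max[OF finA nonempty assms]) (rule trans)

lemma basic_t: "\<not> is_basic A' le' t"
proof
  assume h: "is_basic A' le' t"
  have tot: "\<forall>u\<in>A. \<forall>v\<in>A. le u v \<or> le v u"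
  proof (intro ballI, rule ccontr)
    fix u v assume uv: "u \<in> A" "v \<in> A" "\<not> (le u v \<or> le v u)"
    then have "incomparable le' (f u) (f v) \<and> less_in le' (f u) t \<and> less_in le' (f v) t"
      by (simp add: incomparable_def less_in_def ff ftle)
    moreover have "f u \<in> A'" "f v \<in> A'" using uv A' by auto
    ultimately show False using h unfolding is_basic_def by blast
  qed
  then obtain m where m: "m \<in> A" "\<forall>w\<in>A. le w m" using total_max by blast
  have "f m \<in> A' \<and> less_in le' (f m) t \<and>
          (\<forall>w\<in>A'. w \<noteq> f m \<and> w \<noteq> t \<longrightarrow>
              ((le' w (f m) \<longleftrightarrow> le' w t) \<and> (le' (f m) w \<longleftrightarrow> le' t w)))"
  proof (intro conjI ballI impI)
    show "f m \<in> A'" using m A' by auto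
    show "less_in le' (f m) t" using m by (simp add: less_in_def ftle)
    fix w assume w: "w \<in> A'" "w \<noteq> f m \<and> w \<noteq> t"
    then obtain w' where w': "w = f w'" "w' \<in> A" "w' \<noteq> m" using A' by auto
    show "le' w (f m) \<longleftrightarrow> le' w t" using w' m by (simp add: ff ftle)
    show "le' (f m) w \<longleftrightarrow> le' t w" using w' m antisym by (auto simp: ff tfle)
  qed
  then show False using h unfolding is_basic_def by blast
qed

lemma basic_set: "{z. is_basic A' le' z} = f`{z. is_basic A le z}"
proof (rule set_eqI, rule iffI)
  fix z assume "z \<in> {z. is_basic A' le' z}"
  then have z: "is_basic A' le' z" by simp
  then have "z \<in> A'" by (simp add: is_basic_def)
  then show "z \<in> f`{z. is_basic A le z}" using z basic_t basic_f A' by auto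
qed (auto simp: basic_f)

lemma card_basic: "card {z. is_basic A' le' z} = card {z. is_basic A le z}"
  unfolding basic_set by (rule card_image) (simp add: inj_on_def)

lemma macnb_set: "{U. is_maximal_antichain A' le' U \<and> (\<forall>z\<in>U. \<not> is_basic A' le' z)} =
   insert {t} ((`) f ` {S. is_maximal_antichain A le S \<and> (\<forall>z\<in>S. \<not> is_basic A le z)})"
proof -
  have "{U. is_maximal_antichain A' le' U \<and> (\<forall>z\<in>U. \<not> is_basic A' le' z)} =
     {U \<in> {U. is_maximal_antichain A' le' U}. (\<forall>z\<in>U. \<not> is_basic A' le' z)}" by simp
  also have "\<dots> = {U \<in> insert {t} ((`) f ` {S. is_maximal_antichain A le S}). (\<forall>z\<in>U. \<not> is_basic A' le' z)}"
    by (simp only: mac_set)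
  also have "\<dots> = insert {t} ((`) f ` {S. is_maximal_antichain A le S \<and> (\<forall>z\<in>S. \<not> is_basic A le z)})"
    using basic_t by (auto simp: basic_f)
  finally show ?thesis .
qed

lemma card_macnb: "card {U. is_maximal_antichain A' le' U \<and> (\<forall>z\<in>U. \<not> is_basic A' le' z)} =
   card {S. is_maximal_antichain A le S \<and> (\<forall>z\<in>S. \<not> is_basic A le z)} + 1"
  unfolding macnb_set by (rule card_ins) (auto dest: mac_sub)

end


lemma flip_ac: "is_antichain X (conversep r) S = is_antichain X r S"
  by (auto simp: is_antichain_def incomparable_def)
lemma flip_mac: "is_maximal_antichain X (conversep r) S = is_maximal_antichain X r S"
  by (simp add: is_maximal_antichain_def flip_ac)
lemma flip_ch: "is_chain X (conversep r) S = is_chain X r S"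
  by (auto simp: is_chain_def)
lemma flip_mch: "is_maximal_chain X (conversep r) S = is_maximal_chain X r S"
  by (simp add: is_maximal_chain_def flip_ch)
lemma flip_cut: "is_cutset X (conversep r) S = is_cutset X r S"
  by (simp add: is_cutset_def flip_mch)

locale vbot =
  fixes A A' :: "'a set" and le le' :: "'a \<Rightarrow> 'a \<Rightarrow> bool" and f :: "'a \<Rightarrow> 'a" and l :: 'a
  assumes A': "A' = f`A \<union> {l}" and injf: "inj f" and fl: "\<And>x. f x \<noteq> l"
  and ff: "\<And>u v. le' (f u) (f v) = le u v"
  and lfle: "\<And>u. le' l (f u) = (u \<in> A)"
  and llle: "le' l l"
  and flle: "\<And>v. \<not> le' (f v) l"
  and nonempty: "A \<noteq> {}"
  and finA: "finite A"
  and reflA: "\<And>x. x \<in> A \<Longrightarrow> le x x"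
  and car: "\<And>u v. le u v \<Longrightarrow> u \<in> A \<and> v \<in> A"
  and antisym: "\<And>u v. le u v \<Longrightarrow> le v u \<Longrightarrow> u = v"
  and trans: "\<And>u v w. le u v \<Longrightarrow> le v w \<Longrightarrow> le u w"

sublocale vbot \<subseteq> T: vtop A A' "conversep le" "conversep le'" f l
proof
  show "A' = f`A \<union> {l}" by (rule A')
  show "inj f" by (rule injf)
  show "\<And>x. f x \<noteq> l" by (rule fl)
  show "\<And>u v. conversep le' (f u) (f v) = conversep le u v" by (simp add: ff)
  show "\<And>u. conversep le' (f u) l = (u \<in> A)" by (simp add: lfle)
  show "conversep le' l l" by (simp add: llle)
  show "\<And>v. \<not> conversep le' l (f v)" by (simp add: flle)
  show "A \<noteq> {}" by (rule nonempty)
  show "finite A" by (rule finA)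
  show "\<And>x. x \<in> A \<Longrightarrow> conversep le x x" by (simp add: reflA)
qed

context vbot begin

lemma card_ac: "card {U. is_antichain A' le' U} = card {S. is_antichain A le S} + 1"
  using T.card_ac by (simp add: flip_ac)
lemma card_mac: "card {U. is_maximal_antichain A' le' U} = card {S. is_maximal_antichain A le S} + 1"
  using T.card_mac by (simp add: flip_mac)
lemma card_cut: "card {U. is_cutset A' le' U} = 2 ^ card A + card {S. is_cutset A le S}"
  using T.card_cut by (simp add: flip_cut)
lemma mac_set: "{U. is_maximal_antichain A' le' U} = insert {l} ((`) f ` {S. is_maximal_antichain A le S})"
  using T.mac_set by (simp add: flip_mac)

definition tot where "tot \<longleftrightarrow> (\<forall>u\<in>A. \<forall>v\<in>A. le u v \<or> le v u)"

lemma basic_l: "is_basic A' le' l \<longleftrightarrow> tot"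
  unfolding is_basic_def less_in_def incomparable_def A' tot_def
  by (simp add: ball_Un bex_Un ff lfle llle flle)

lemma memA': "z \<in> A' \<longleftrightarrow> z = l \<or> (\<exists>x\<in>A. z = f x)"
  unfolding A' by auto

lemma bexA': "(\<exists>u\<in>A'. P u) \<longleftrightarrow> P l \<or> (\<exists>x\<in>A. P (f x))"
  unfolding A' by auto
lemma ballA': "(\<forall>u\<in>A'. P u) \<longleftrightarrow> P l \<and> (\<forall>x\<in>A. P (f x))"
  unfolding A' by auto

lemma feq[simp]: "f x = f y \<longleftrightarrow> x = y" using injf by (simp add: inj_eq)
lemma flne[simp]: "f x \<noteq> l" "l \<noteq> f x" using fl by metis+

lemma l_branch: assumes xA: "x \<in> A"
  shows "(\<forall>w\<in>A'. w \<noteq> l \<and> w \<noteq> f x \<longrightarrow> ((le' w l \<longleftrightarrow> le' w (f x)) \<and> (le' l w \<longleftrightarrow> le' (f x) w)))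
     \<longleftrightarrow> (\<forall>w\<in>A. le x w)"
proof
  assume H: "\<forall>w\<in>A'. w \<noteq> l \<and> w \<noteq> f x \<longrightarrow> ((le' w l \<longleftrightarrow> le' w (f x)) \<and> (le' l w \<longleftrightarrow> le' (f x) w))"
  show "\<forall>w\<in>A. le x w"
  proof
    fix w assume w: "w \<in> A"
    show "le x w"
    proof (cases "w = x")
      case True then show ?thesis using reflA xA by simp
    next
      case False
      have "f w \<in> A'" using w A' by simp
      then have "le' l (f w) \<longleftrightarrow> le' (f x) (f w)" using H False by simp
      then show ?thesis using w by (simp add: lfle ff)
    qed
  qed
next
  assume H: "\<forall>w\<in>A. le x w"
  show "\<forall>w\<in>A'. w \<noteq> l \<and> w \<noteq> f x \<longrightarrow> ((le' w l \<longleftrightarrow> le' w (f x)) \<and> (le' l w \<longleftrightarrow> le' (f x) w))"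
  proof (intro ballI impI)
    fix w assume w: "w \<in> A'" "w \<noteq> l \<and> w \<noteq> f x"
    then obtain w' where w': "w = f w'" "w' \<in> A" "w' \<noteq> x" using A' by auto
    have "\<not> le w' x"
    proof
      assume "le w' x"
      then have "w' = x" using antisym H w' by simp
      then show False using w' by simp
    qed
    then show "(le' w l \<longleftrightarrow> le' w (f x)) \<and> (le' l w \<longleftrightarrow> le' (f x) w)"
      using w' H by (simp add: ff flle lfle)
  qed
qed

lemma basic_fb: "is_basic A' le' (f x) \<longleftrightarrow> is_basic A le x \<and> \<not> (\<forall>w\<in>A. le x w)"
proof (cases "x \<in> A")
  case False
  then show ?thesis by (simp add: is_basic_def memA')
next
  case xA: True
  have b1: "(\<exists>u\<in>A'. \<exists>v\<in>A'. incomparable le' u v \<and> less_in le' u (f x) \<and> less_in le' v (f x))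
      \<longleftrightarrow> (\<exists>u\<in>A. \<exists>v\<in>A. incomparable le u v \<and> less_in le u x \<and> less_in le v x)"
    unfolding bexA' incomparable_def less_in_def using xA by (auto simp: ff flle lfle llle)
  have b2: "(\<exists>u\<in>A'. \<exists>v\<in>A'. incomparable le' u v \<and> less_in le' (f x) u \<and> less_in le' (f x) v)
      \<longleftrightarrow> (\<exists>u\<in>A. \<exists>v\<in>A. incomparable le u v \<and> less_in le x u \<and> less_in le x v)"
    unfolding bexA' incomparable_def less_in_def using xA by (auto simp: ff flle lfle llle)
  have b3f: "(\<exists>u\<in>A. less_in le' (f u) (f x) \<and>
          (\<forall>w\<in>A'. w \<noteq> f u \<and> w \<noteq> f x \<longrightarrow> ((le' w (f u) \<longleftrightarrow> le' w (f x)) \<and> (le' (f u) w \<longleftrightarrow> le' (f x) w))))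
      \<longleftrightarrow> (\<exists>u\<in>A. less_in le u x \<and>
          (\<forall>w\<in>A. w \<noteq> u \<and> w \<noteq> x \<longrightarrow> ((le w u \<longleftrightarrow> le w x) \<and> (le u w \<longleftrightarrow> le x w))))"
    unfolding ballA' bexA' less_in_def using xA by (auto simp: ff flle lfle llle)
  have b3: "(\<exists>u\<in>A'. less_in le' u (f x) \<and>
          (\<forall>w\<in>A'. w \<noteq> u \<and> w \<noteq> f x \<longrightarrow> ((le' w u \<longleftrightarrow> le' w (f x)) \<and> (le' u w \<longleftrightarrow> le' (f x) w))))
      \<longleftrightarrow> (\<exists>u\<in>A. less_in le' (f u) (f x) \<and>
          (\<forall>w\<in>A'. w \<noteq> f u \<and> w \<noteq> f x \<longrightarrow> ((le' w (f u) \<longleftrightarrow> le' w (f x)) \<and> (le' (f u) w \<longleftrightarrow> le' (f x) w))))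
        \<or> (less_in le' l (f x) \<and> (\<forall>w\<in>A'. w \<noteq> l \<and> w \<noteq> f x \<longrightarrow> ((le' w l \<longleftrightarrow> le' w (f x)) \<and> (le' l w \<longleftrightarrow> le' (f x) w))))"
    unfolding bexA' by blast
  have ll: "less_in le' l (f x)" using xA by (simp add: less_in_def lfle)
  have "f x \<in> A'" using xA by (simp add: memA')
  then show ?thesis
    unfolding is_basic_def using b1 b2 b3 b3f ll l_branch[OF xA] xA by blast
qed


lemma least_basic: assumes "tot" "x0 \<in> A" "\<forall>w\<in>A. le x0 w" shows "is_basic A le x0"
  unfolding is_basic_def
proof (intro conjI assms(2) notI)
  assume "\<exists>u\<in>A. \<exists>v\<in>A. incomparable le u v \<and> less_in le u x0 \<and> less_in le v x0"
  then show False using assms(1) by (auto simp: tot_def incomparable_def)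
next
  assume "\<exists>u\<in>A. \<exists>v\<in>A. incomparable le u v \<and> less_in le x0 u \<and> less_in le x0 v"
  then show False using assms(1) by (auto simp: tot_def incomparable_def)
next
  assume "\<exists>u\<in>A. less_in le u x0 \<and> (\<forall>w\<in>A. w \<noteq> u \<and> w \<noteq> x0 \<longrightarrow> ((le w u \<longleftrightarrow> le w x0) \<and> (le u w \<longleftrightarrow> le x0 w)))"
  then obtain u where "u \<in> A" "le u x0" "u \<noteq> x0" by (auto simp: less_in_def)
  then show False using assms(3) antisym by blast
qed

lemma least_not_basic: assumes "\<not> tot" "\<forall>w\<in>A. le x0 w" shows "\<not> is_basic A le x0"
proof
  assume b: "is_basic A le x0"
  obtain u v where uv: "u \<in> A" "v \<in> A" "\<not> le u v" "\<not> le v u" using assms(1) by (auto simp: tot_def)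
  then have "u \<noteq> x0" "v \<noteq> x0" using assms(2) by auto
  then have "incomparable le u v \<and> less_in le x0 u \<and> less_in le x0 v"
    using uv assms(2) by (auto simp: incomparable_def less_in_def)
  then show False using b uv unfolding is_basic_def by blast
qed

lemma tot_least: assumes "tot" obtains x0 where "x0 \<in> A" "\<forall>w\<in>A. le x0 w"
proof -
  have "\<exists>m\<in>A. \<forall>w\<in>A. conversep le w m"
    by (rule exists_max[OF finA nonempty]) (use assms trans in \<open>auto simp: tot_def\<close>)
  then show ?thesis using that by auto
qed

lemma basic_sub: "is_basic X r z \<Longrightarrow> z \<in> X" by (simp add: is_basic_def)

lemma least_unique: assumes "x0 \<in> A" "\<forall>w\<in>A. le x0 w" "x \<in> A"
  shows "(\<forall>w\<in>A. le x w) \<longleftrightarrow> x = x0"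
proof
  assume "\<forall>w\<in>A. le x w"
  then have "le x x0" using assms by simp
  moreover have "le x0 x" using assms by simp
  ultimately show "x = x0" by (rule antisym)
qed (use assms in simp)

lemma basic_set_b: "{z. is_basic A' le' z} = (if tot then {l} else {}) \<union> f`{x. is_basic A le x \<and> \<not> (\<forall>w\<in>A. le x w)}"
proof (rule set_eqI, rule iffI)
  fix z assume "z \<in> {z. is_basic A' le' z}"
  then have z: "is_basic A' le' z" by simp
  then have "z \<in> A'" by (rule basic_sub)
  then have "z = l \<or> (\<exists>x\<in>A. z = f x)" using memA' by simp
  then show "z \<in> (if tot then {l} else {}) \<union> f`{x. is_basic A le x \<and> \<not> (\<forall>w\<in>A. le x w)}"
  proof
    assume "z = l"
    then have "tot" using z basic_l by simp
    then show ?thesis using \<open>z = l\<close> by simp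
  next
    assume "\<exists>x\<in>A. z = f x"
    then obtain x where "z = f x" by blast
    then have "is_basic A le x \<and> \<not> (\<forall>w\<in>A. le x w)" using z basic_fb by simp
    then show ?thesis using \<open>z = f x\<close> by blast
  qed
next
  fix z assume z: "z \<in> (if tot then {l} else {}) \<union> f`{x. is_basic A le x \<and> \<not> (\<forall>w\<in>A. le x w)}"
  show "z \<in> {z. is_basic A' le' z}"
  proof (cases "z = l")
    case True
    then have "tot" using z by (auto split: if_splits)
    then show ?thesis using True basic_l by simp
  next
    case False
    then obtain x where "z = f x" "is_basic A le x \<and> \<not> (\<forall>w\<in>A. le x w)" using z by (auto split: if_splits)
    then show ?thesis using basic_fb by simp
  qed
qed

lemma finB: "finite {x. is_basic A le x}"
proof (rule finite_subset[OF _ finA])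
  show "{x. is_basic A le x} \<subseteq> A"
  proof
    fix x assume "x \<in> {x. is_basic A le x}"
    then show "x \<in> A" by (simp add: is_basic_def)
  qed
qed

lemma card_basic: "card {z. is_basic A' le' z} = card {z. is_basic A le z}"
proof (cases tot)
  case True
  then obtain x0 where x0: "x0 \<in> A" "\<forall>w\<in>A. le x0 w" by (rule tot_least)
  have e: "{x. is_basic A le x \<and> \<not> (\<forall>w\<in>A. le x w)} = {x. is_basic A le x} - {x0}"
  proof (rule set_eqI)
    fix x
    show "x \<in> {x. is_basic A le x \<and> \<not> (\<forall>w\<in>A. le x w)} \<longleftrightarrow> x \<in> {x. is_basic A le x} - {x0}"
    proof (cases "is_basic A le x")
      case True
      then have "x \<in> A" by (rule basic_sub)
      have "(\<forall>w\<in>A. le x w) \<longleftrightarrow> x = x0" by (rule least_unique[OF x0 \<open>x \<in> A\<close>])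
      then show ?thesis using True by blast
    qed simp
  qed
  have b0: "x0 \<in> {x. is_basic A le x}" using least_basic[OF True x0] by simp
  have "card {z. is_basic A' le' z} = card (insert l (f`({x. is_basic A le x} - {x0})))"
    using True unfolding basic_set_b e by simp
  also have "\<dots> = card (f`({x. is_basic A le x} - {x0})) + 1"
    using finB by (subst card_insert_disjoint) auto
  also have "\<dots> = card ({x. is_basic A le x} - {x0}) + 1"
    by (subst card_image) (auto simp: inj_on_def)
  also have "\<dots> = card {x. is_basic A le x}"
    using card.remove[OF finB b0] by simp
  finally show ?thesis .
next
  case False
  have e: "{x. is_basic A le x \<and> \<not> (\<forall>w\<in>A. le x w)} = {x. is_basic A le x}"
    using least_not_basic[OF False] by blast
  have "card {z. is_basic A' le' z} = card (f`{x. is_basic A le x})"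
    using False unfolding basic_set_b e by simp
  also have "\<dots> = card {x. is_basic A le x}"
    by (rule card_image) (simp add: inj_on_def)
  finally show ?thesis .
qed

lemma card_macnb: "card {U. is_maximal_antichain A' le' U \<and> (\<forall>z\<in>U. \<not> is_basic A' le' z)} =
   card {S. is_maximal_antichain A le S \<and> (\<forall>z\<in>S. \<not> is_basic A le z)} + 1"
proof -
  let ?X0 = "{S. is_maximal_antichain A le S \<and> (\<forall>z\<in>S. \<not> is_basic A le z)}"
  have e1: "{U. is_maximal_antichain A' le' U \<and> (\<forall>z\<in>U. \<not> is_basic A' le' z)} =
     (if tot then {} else {{l}}) \<union> (`) f ` {S. is_maximal_antichain A le S \<and> (\<forall>z\<in>S. \<not> (is_basic A le z \<and> \<not> (\<forall>w\<in>A. le z w)))}"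
  proof -
    have "{U. is_maximal_antichain A' le' U \<and> (\<forall>z\<in>U. \<not> is_basic A' le' z)} =
       {U \<in> {U. is_maximal_antichain A' le' U}. (\<forall>z\<in>U. \<not> is_basic A' le' z)}" by simp
    also have "\<dots> = {U \<in> insert {l} ((`) f ` {S. is_maximal_antichain A le S}). (\<forall>z\<in>U. \<not> is_basic A' le' z)}"
      by (simp only: mac_set)
    also have "\<dots> = (if tot then {} else {{l}}) \<union> (`) f ` {S. is_maximal_antichain A le S \<and> (\<forall>z\<in>S. \<not> (is_basic A le z \<and> \<not> (\<forall>w\<in>A. le z w)))}"
    proof -
      have p1: "(\<forall>z\<in>{l}. \<not> is_basic A' le' z) \<longleftrightarrow> \<not> tot" using basic_l by simp
      have p2: "\<And>S. (\<forall>z\<in>f`S. \<not> is_basic A' le' z) \<longleftrightarrow> (\<forall>z\<in>S. \<not> (is_basic A le z \<and> \<not> (\<forall>w\<in>A. le z w)))"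
        by (simp only: ball_simps basic_fb)
      show ?thesis
      proof (rule set_eqI)
        fix U
        show "U \<in> {U \<in> insert {l} ((`) f ` {S. is_maximal_antichain A le S}). (\<forall>z\<in>U. \<not> is_basic A' le' z)} \<longleftrightarrow>
          U \<in> (if tot then {} else {{l}}) \<union> (`) f ` {S. is_maximal_antichain A le S \<and> (\<forall>z\<in>S. \<not> (is_basic A le z \<and> \<not> (\<forall>w\<in>A. le z w)))}"
          using p1 p2 by (cases tot) auto
      qed
    qed
    finally show ?thesis .
  qed
  have sub: "\<And>Y. Y \<subseteq> {S. is_maximal_antichain A le S} \<Longrightarrow> Y \<subseteq> Pow A"
  proof
    fix Y S assume "Y \<subseteq> {S. is_maximal_antichain A le S}" "S \<in> Y"
    then have "is_maximal_antichain A le S" by auto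
    then show "S \<in> Pow A" by (simp add: is_maximal_antichain_def is_antichain_def)
  qed
  show ?thesis
  proof (cases tot)
    case False
    have pz: "\<And>z. \<not> (is_basic A le z \<and> \<not> (\<forall>w\<in>A. le z w)) \<longleftrightarrow> \<not> is_basic A le z"
      using least_not_basic[OF False] by auto
    have "{S. is_maximal_antichain A le S \<and> (\<forall>z\<in>S. \<not> (is_basic A le z \<and> \<not> (\<forall>w\<in>A. le z w)))} = ?X0"
      by (simp only: pz)
    then show ?thesis using False e1 T.card_ins[of ?X0] sub[of ?X0] by auto
  next
    case True
    then obtain x0 where x0: "x0 \<in> A" "\<forall>w\<in>A. le x0 w" by (rule tot_least)
    have b0: "is_basic A le x0" using least_basic[OF True x0] by simp
    have only: "\<And>T. is_antichain A le T \<Longrightarrow> x0 \<in> T \<Longrightarrow> T = {x0}"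
    proof -
      fix T assume t: "is_antichain A le T" "x0 \<in> T"
      show "T = {x0}"
      proof (rule ccontr)
        assume "T \<noteq> {x0}"
        then obtain y where y: "y \<in> T" "y \<noteq> x0" using t by auto
        have tA: "T \<subseteq> A" and ac: "\<forall>u\<in>T. \<forall>v\<in>T. u \<noteq> v \<longrightarrow> incomparable le u v"
          using t(1) by (simp_all add: is_antichain_def)
        have "incomparable le x0 y" using ac t(2) y by simp
        moreover have "y \<in> A" using tA y by auto
        ultimately show False using x0 by (simp add: incomparable_def)
      qed
    qed
    have m0: "is_maximal_antichain A le {x0}" unfolding is_maximal_antichain_def
    proof (intro conjI allI impI)
      show "is_antichain A le {x0}" using x0 by (simp add: is_antichain_def)
      fix T assume t: "is_antichain A le T \<and> {x0} \<subseteq> T"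
      then show "T = {x0}" using only by simp
    qed
    have e2: "{S. is_maximal_antichain A le S \<and> (\<forall>z\<in>S. \<not> (is_basic A le z \<and> \<not> (\<forall>w\<in>A. le z w)))} = insert {x0} ?X0"
    proof (rule set_eqI, rule iffI)
      fix S assume "S \<in> {S. is_maximal_antichain A le S \<and> (\<forall>z\<in>S. \<not> (is_basic A le z \<and> \<not> (\<forall>w\<in>A. le z w)))}"
      then have s: "is_maximal_antichain A le S" "\<forall>z\<in>S. \<not> (is_basic A le z \<and> \<not> (\<forall>w\<in>A. le z w))" by simp_all
      show "S \<in> insert {x0} ?X0"
      proof (cases "x0 \<in> S")
        case True
        have "is_antichain A le S" using s(1) by (simp add: is_maximal_antichain_def)
        then have "S = {x0}" using only True by simp
        then show ?thesis by simp
      next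
        case False
        have "\<forall>z\<in>S. \<not> is_basic A le z"
        proof
          fix z assume z: "z \<in> S"
          show "\<not> is_basic A le z"
          proof
            assume bz: "is_basic A le z"
            from s(2) z have "\<not> (is_basic A le z \<and> \<not> (\<forall>w\<in>A. le z w))" by simp
            then have "\<forall>w\<in>A. le z w" using bz by simp
            moreover have "z \<in> A" using bz by (rule basic_sub)
            ultimately have "z = x0" using least_unique[OF x0] by simp
            then show False using z False by simp
          qed
        qed
        then show ?thesis using s(1) by simp
      qed
    next
      fix S assume "S \<in> insert {x0} ?X0"
      then consider "S = {x0}" | "S \<in> ?X0" by auto
      then show "S \<in> {S. is_maximal_antichain A le S \<and> (\<forall>z\<in>S. \<not> (is_basic A le z \<and> \<not> (\<forall>w\<in>A. le z w)))}"
      proof cases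
        case 1 then show ?thesis using m0 x0(2) by simp
      next
        case 2 then show ?thesis by simp
      qed
    qed
    have "?X0 \<subseteq> Pow A" by (rule sub) (simp add: subset_iff)
    then have finX: "finite ?X0" using finA by (simp add: finite_subset)
    have "{x0} \<notin> ?X0" using b0 by simp
    then have "card (insert {x0} ?X0) = card ?X0 + 1" using finX by simp
    moreover have "card ((`) f ` insert {x0} ?X0) = card (insert {x0} ?X0)"
      by (rule card_image) (simp add: inj_on_def inj_image_eq_iff[OF injf])
    ultimately show ?thesis using True e1 e2 by simp
  qed
qed

end


lemma vun_inst: "vun (vcar a) (vcar b) (vcar (VUnion a b)) (vle a) (vle b) (vle (VUnion a b)) (Cons 0) (Cons 1)"
  by unfold_locales auto

lemma vtop_inst: assumes "vcar a \<noteq> {}"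
  shows "vtop_po (vcar a) (vcar (VTop a)) (vle a) (vle (VTop a)) (Cons 0) [1]"
proof unfold_locales
  show "\<And>u v. vle a u v \<Longrightarrow> u \<in> vcar a \<and> v \<in> vcar a" by (rule vle_car)
  show "\<And>u v. vle a u v \<Longrightarrow> vle a v u \<Longrightarrow> u = v" by (rule vle_antisym)
  show "\<And>u v w. vle a u v \<Longrightarrow> vle a v w \<Longrightarrow> vle a u w" by (rule vle_trans)
  show "\<And>x. x \<in> vcar a \<Longrightarrow> vle a x x" by (rule vle_refl)
  show "vcar a \<noteq> {}" by (rule assms)
  show "finite (vcar a)" by (rule vcar_finite)
qed auto

lemma vbot_inst: assumes "vcar a \<noteq> {}"
  shows "vbot (vcar a) (vcar (VBot a)) (vle a) (vle (VBot a)) (Cons 0) [1]"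
proof unfold_locales
  show "\<And>u v. vle a u v \<Longrightarrow> u \<in> vcar a \<and> v \<in> vcar a" by (rule vle_car)
  show "\<And>u v. vle a u v \<Longrightarrow> vle a v u \<Longrightarrow> u = v" by (rule vle_antisym)
  show "\<And>u v w. vle a u v \<Longrightarrow> vle a v w \<Longrightarrow> vle a u w" by (rule vle_trans)
  show "\<And>x. x \<in> vcar a \<Longrightarrow> vle a x x" by (rule vle_refl)
  show "vcar a \<noteq> {}" by (rule assms)
  show "finite (vcar a)" by (rule vcar_finite)
qed auto

lemma sub_single: "S \<subseteq> {t} \<longleftrightarrow> S = {} \<or> S = {t}" by auto

lemma sing_ac: "{S. is_antichain {t} r S} = {{}, {t}}"
  by (auto simp: is_antichain_def sub_single)
lemma sing_mac: "{S. is_maximal_antichain {t} r S} = {{t}}"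
  by (auto simp: is_maximal_antichain_def is_antichain_def sub_single)
lemma sing_basic: "{z. is_basic {t} r z} = {t}"
  by (auto simp: is_basic_def less_in_def)
lemma sing_cut: assumes "r t t" shows "{S. is_cutset {t} r S} = {{t}}"
proof -
  have m: "is_maximal_chain {t} r {t}" using assms
    by (auto simp: is_maximal_chain_def is_chain_def sub_single)
  have "\<not> is_cutset {t} r {}" using m by (auto simp: is_cutset_def)
  moreover have "is_cutset {t} r {t}" by (auto simp: is_cutset_def is_maximal_chain_def is_chain_def)
  ultimately show ?thesis by (auto simp: sub_single is_cutset_def)
qed

lemma emp_ac: "{S. is_antichain {} r S} = {{}}" by (auto simp: is_antichain_def)
lemma emp_mac: "{S. is_maximal_antichain {} r S} = {{}}" by (auto simp: is_maximal_antichain_def is_antichain_def)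
lemma emp_basic: "{z. is_basic {} r z} = {}" by (auto simp: is_basic_def)
lemma emp_macnb: "{S. is_maximal_antichain {} r S \<and> (\<forall>z\<in>S. \<not> is_basic {} r z)} = {{}}"
  by (auto simp: is_maximal_antichain_def is_antichain_def)
lemma sing_macnb: "{S. is_maximal_antichain {t} r S \<and> (\<forall>z\<in>S. \<not> is_basic {t} r z)} = {}"
  using sing_mac[of t r] sing_basic[of t r] by auto
lemma emp_cut: "{S. is_cutset {} r S} = {{}}"
  by (auto simp: is_cutset_def is_maximal_chain_def is_chain_def)

lemma top_empty: assumes "vcar a = {}"
  shows "vcar (VTop a) = {[1]}" "vle (VTop a) [1] [1]"
  using assms by auto
lemma bot_empty: assumes "vcar a = {}"
  shows "vcar (VBot a) = {[1]}" "vle (VBot a) [1] [1]"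
  using assms by auto

lemma P1: "vpoly e (1::nat) 1 = card {S. is_maximal_antichain (vcar e) (vle e) S}"
proof (induction e)
  case VEmpty then show ?case by (simp add: emp_mac)
next
  case (VUnion a b) then show ?case using vun.card_mac[OF vun_inst, of a b] by (simp add: vcar_finite power_add del: vle.simps vcar.simps)
next
  case (VTop a)
  show ?case
  proof (cases "vcar a = {}")
    case True then show ?thesis by (simp add: top_empty[OF True] sing_mac del: vle.simps)
  next
    case False
    
    then show ?thesis using VTop vtop.card_mac[OF vtop_po.axioms(1)[OF vtop_inst[OF False]]] by (simp add: power_0_left del: vle.simps vcar.simps)
  qed
next
  case (VBot a)
  show ?case
  proof (cases "vcar a = {}")
    case True then show ?thesis by (simp add: bot_empty[OF True] sing_mac del: vle.simps)
  next
    case False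
    
    then show ?thesis using VBot vbot.card_mac[OF vbot_inst[OF False]] by (simp add: power_0_left del: vle.simps vcar.simps)
  qed
qed

lemma P2: "vpoly e (x::'a::comm_semiring_1) 0 = x ^ card {z. is_basic (vcar e) (vle e) z}"
proof (induction e)
  case VEmpty then show ?case by (simp add: emp_basic)
next
  case (VUnion a b) then show ?case using vun.card_basic[OF vun_inst, of a b] by (simp add: vcar_finite power_add del: vle.simps vcar.simps)
next
  case (VTop a)
  show ?case
  proof (cases "vcar a = {}")
    case True then show ?thesis by (simp add: top_empty[OF True] sing_basic del: vle.simps)
  next
    case False
    then have "card (vcar a) > 0" using vcar_finite card_gt_0_iff by blast
    then show ?thesis using False VTop vtop_po.card_basic[OF vtop_inst[OF False]] by (simp add: power_0_left del: vle.simps vcar.simps)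
  qed
next
  case (VBot a)
  show ?case
  proof (cases "vcar a = {}")
    case True then show ?thesis by (simp add: bot_empty[OF True] sing_basic del: vle.simps)
  next
    case False
    then have "card (vcar a) > 0" using vcar_finite card_gt_0_iff by blast
    then show ?thesis using False VBot vbot.card_basic[OF vbot_inst[OF False]] by (simp add: power_0_left del: vle.simps vcar.simps)
  qed
qed

lemma P3: "vpoly e (0::nat) 1 = card {S. is_maximal_antichain (vcar e) (vle e) S \<and> (\<forall>z\<in>S. \<not> is_basic (vcar e) (vle e) z)}"
proof (induction e)
  case VEmpty then show ?case by (simp add: emp_macnb)
next
  case (VUnion a b) then show ?case using vun.card_macnb[OF vun_inst, of a b] by (simp add: vcar_finite power_add del: vle.simps vcar.simps)
next
  case (VTop a)
  show ?case
  proof (cases "vcar a = {}")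
    case True then show ?thesis by (simp add: top_empty[OF True] sing_macnb del: vle.simps)
  next
    case False
    
    then show ?thesis using VTop vtop_po.card_macnb[OF vtop_inst[OF False]] by (simp add: power_0_left del: vle.simps vcar.simps)
  qed
next
  case (VBot a)
  show ?case
  proof (cases "vcar a = {}")
    case True then show ?thesis by (simp add: bot_empty[OF True] sing_macnb del: vle.simps)
  next
    case False
    
    then show ?thesis using VBot vbot.card_macnb[OF vbot_inst[OF False]] by (simp add: power_0_left del: vle.simps vcar.simps)
  qed
qed

lemma P4: "vpoly e (2::nat) 1 = card {S. is_antichain (vcar e) (vle e) S}"
proof (induction e)
  case VEmpty then show ?case by (simp add: emp_ac)
next
  case (VUnion a b) then show ?case using vun.card_antichain[OF vun_inst, of a b] by (simp add: vcar_finite power_add del: vle.simps vcar.simps)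
next
  case (VTop a)
  show ?case
  proof (cases "vcar a = {}")
    case True then show ?thesis by (simp add: top_empty[OF True] sing_ac del: vle.simps)
  next
    case False
    
    then show ?thesis using VTop vtop.card_ac[OF vtop_po.axioms(1)[OF vtop_inst[OF False]]] by (simp add: power_0_left del: vle.simps vcar.simps)
  qed
next
  case (VBot a)
  show ?case
  proof (cases "vcar a = {}")
    case True then show ?thesis by (simp add: bot_empty[OF True] sing_ac del: vle.simps)
  next
    case False
    
    then show ?thesis using VBot vbot.card_ac[OF vbot_inst[OF False]] by (simp add: power_0_left del: vle.simps vcar.simps)
  qed
qed

lemma P5: "vpoly e (1::nat) 2 = card {S. is_cutset (vcar e) (vle e) S}"
proof (induction e)
  case VEmpty then show ?case by (simp add: emp_cut)
next
  case (VUnion a b) then show ?case using vun.card_cut[OF vun_inst, of a b] by (simp add: vcar_finite power_add del: vle.simps vcar.simps)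
next
  case (VTop a)
  show ?case
  proof (cases "vcar a = {}")
    case True then show ?thesis using sing_cut[where t="[1]" and r="vle (VTop a)", OF top_empty(2)[OF True]] by (simp add: top_empty[OF True] del: vle.simps)
  next
    case False
    
    then show ?thesis using VTop vtop.card_cut[OF vtop_po.axioms(1)[OF vtop_inst[OF False]]] by (simp add: power_0_left del: vle.simps vcar.simps)
  qed
next
  case (VBot a)
  show ?case
  proof (cases "vcar a = {}")
    case True then show ?thesis using sing_cut[where t="[1]" and r="vle (VBot a)", OF bot_empty(2)[OF True]] by (simp add: bot_empty[OF True] del: vle.simps)
  next
    case False
    
    then show ?thesis using VBot vbot.card_cut[OF vbot_inst[OF False]] by (simp add: power_0_left del: vle.simps vcar.simps)
  qed
qed

lemma P6: "vpoly e (2::nat) 2 = 2 ^ card (vcar e)"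
proof (induction e)
  case VEmpty then show ?case by simp
next
  case (VUnion a b) then show ?case using vun.card_car[OF vun_inst, of a b] by (simp add: vcar_finite power_add del: vle.simps vcar.simps)
next
  case (VTop a)
  have "[1] \<notin> (#) 0 ` vcar a" by auto
  then have "card (vcar (VTop a)) = card (vcar a) + 1"
    by (simp add: vcar_finite card_image)
  then show ?case using VTop by (cases "vcar a = {}") simp_all
next
  case (VBot a)
  have "[1] \<notin> (#) 0 ` vcar a" by auto
  then have "card (vcar (VBot a)) = card (vcar a) + 1"
    by (simp add: vcar_finite card_image)
  then show ?case using VBot by (cases "vcar a = {}") simp_all
qed

theorem proposition3p19:
  fixes e :: vexp
  shows "vpoly e (1::nat) 1 = card {S. is_maximal_antichain (vcar e) (vle e) S}
    \<and> (\<forall>x :: 'a::comm_semiring_1. vpoly e x 0 = x ^ card {z. is_basic (vcar e) (vle e) z})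
    \<and> vpoly e (0::nat) 1 =
         card {S. is_maximal_antichain (vcar e) (vle e) S \<and> (\<forall>z\<in>S. \<not> is_basic (vcar e) (vle e) z)}
    \<and> vpoly e (2::nat) 1 = card {S. is_antichain (vcar e) (vle e) S}
    \<and> vpoly e (1::nat) 2 = card {S. is_cutset (vcar e) (vle e) S}
    \<and> vpoly e (2::nat) 2 = 2 ^ card (vcar e)"
  using P1 P2 P3 P4 P5 P6 by blast


end
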